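(* Let $3\le k\le n-1$ and let $T$ be a tree attaining the maximum value of $M_2$ over $\mathcal{CT}_{n,k}$. If $T$ contains a pendent vertex adjacent to a vertex of degree $4$, then $T$ contains no vertex of degree $3$ adjacent to a vertex of degree $2$.
   Context: A chemical tree is a tree with maximum degree at most $4$. A pendent vertex has degree $1$. A segment of a tree is a path of positive length neither of whose end vertices has degree $2$ and all of whose internal vertices have degree $2$. $\mathcal{CT}_{n,k}$ is the class of all $n$-vertex chemical trees with exactly $k$ segments. $M_2(G)=\sum_{uv\in E(G)}d_ud_v$, where $d_v$ is the degree of $v$. *)

theory Defs
  imports Main
begin

definition adj :: "'a set set \<Rightarrow> 'a \<Rightarrow> 'a \<Rightarrow> bool" where
  "adj E u v \<longleftrightarrow> u \<noteq> v \<and> {u, v} \<in> E"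

definition deg :: "'a set set \<Rightarrow> 'a \<Rightarrow> nat" where
  "deg E v = card {e \<in> E. v \<in> e}"

definition is_tree :: "'a set \<Rightarrow> 'a set set \<Rightarrow> bool" where
  "is_tree V E \<longleftrightarrow> finite V \<and> V \<noteq> {} \<and>
     E \<subseteq> {{u, v} | u v. u \<in> V \<and> v \<in> V \<and> u \<noteq> v} \<and>
     (\<forall>u\<in>V. \<forall>v\<in>V. (u, v) \<in> {(x, y). adj E x y}\<^sup>*) \<and>
     card E = card V - 1"

definition chemical :: "'a set \<Rightarrow> 'a set set \<Rightarrow> bool" where
  "chemical V E \<longleftrightarrow> (\<forall>v\<in>V. deg E v \<le> 4)"

definition is_segment :: "'a set set \<Rightarrow> 'a list \<Rightarrow> bool" where
  "is_segment E p \<longleftrightarrow> length p \<ge> 2 \<and> distinct p \<and>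
     (\<forall>i < length p - 1. adj E (p ! i) (p ! Suc i)) \<and>
     deg E (hd p) \<noteq> 2 \<and> deg E (last p) \<noteq> 2 \<and>
     (\<forall>i. 0 < i \<and> i < length p - 1 \<longrightarrow> deg E (p ! i) = 2)"

text \<open>Segments are counted as unordered objects (a path and its reversal are the same
  segment); in a tree a path is determined by its vertex set.\<close>

definition num_segments :: "'a set set \<Rightarrow> nat" where
  "num_segments E = card {set p | p. is_segment E p}"

definition M2 :: "'a set set \<Rightarrow> nat" where
  "M2 E = (\<Sum>e\<in>E. \<Prod>v\<in>e. deg E v)"

definition CT :: "nat \<Rightarrow> nat \<Rightarrow> (nat set \<times> nat set set) set" where
  "CT n k = {(V, E). is_tree V E \<and> chemical V E \<and> card V = n \<and> num_segments E = k}"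

end

theory Submission
  imports Defs
begin

definition pairs :: "'a set \<Rightarrow> 'a set set" where
  "pairs V = {{u, v} | u v. u \<in> V \<and> v \<in> V \<and> u \<noteq> v}"

lemma pairs_sub_Pow: "pairs V \<subseteq> Pow V"
  unfolding pairs_def by auto

lemma finite_E: "finite V \<Longrightarrow> E \<subseteq> pairs V \<Longrightarrow> finite E"
  using pairs_sub_Pow by (meson finite_Pow_iff finite_subset subset_trans)

lemma edge_mem: "E \<subseteq> pairs V \<Longrightarrow> e \<in> E \<Longrightarrow> z \<in> e \<Longrightarrow> z \<in> V"
  unfolding pairs_def by auto

lemma edge_form: "E \<subseteq> pairs V \<Longrightarrow> e \<in> E \<Longrightarrow> z \<in> e \<Longrightarrow> \<exists>y. y \<noteq> z \<and> e = {z, y}"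
  unfolding pairs_def by auto

lemma conn_count:
  assumes fin: "finite V" and r: "r \<in> V" and EV: "E \<subseteq> pairs V"
    and conn: "\<forall>u\<in>V. \<forall>v\<in>V. (u, v) \<in> {(x, y). adj E x y}\<^sup>*"
  shows "card V \<le> card E + 1"
proof -
  let ?R = "{(x, y). adj E x y}"
  define dist where "dist v = (LEAST n. (v, r) \<in> ?R ^^ n)" for v
  have dpow: "(v, r) \<in> ?R ^^ dist v" if "v \<in> V" for v
  proof -
    from conn that r have "(v, r) \<in> ?R\<^sup>*" by blast
    then obtain n where "(v, r) \<in> ?R ^^ n" using rtrancl_power by blast
    then show ?thesis unfolding dist_def by (rule LeastI)
  qed
  have nxt: "\<exists>p. adj E v p \<and> p \<in> V \<and> dist p < dist v" if "v \<in> V" "v \<noteq> r" for v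
  proof -
    have d: "(v, r) \<in> ?R ^^ dist v" using dpow that by blast
    have "dist v \<noteq> 0"
    proof
      assume "dist v = 0"
      with d have "(v, r) \<in> Id" by simp
      with that show False by simp
    qed
    then obtain m where m: "dist v = Suc m" by (cases "dist v") auto
    with d obtain p where p1: "(v, p) \<in> ?R" and p2: "(p, r) \<in> ?R ^^ m"
      by (metis relpow_Suc_D2)
    have "dist p \<le> m" unfolding dist_def using p2 by (rule Least_le)
    moreover have "p \<in> V" using p1 EV unfolding adj_def by (auto intro: edge_mem)
    ultimately show ?thesis using p1 m by auto
  qed
  define f where "f v = {v, SOME p. adj E v p \<and> p \<in> V \<and> dist p < dist v}" for v
  have fprop: "adj E v (SOME p. adj E v p \<and> p \<in> V \<and> dist p < dist v) \<and>
      dist (SOME p. adj E v p \<and> p \<in> V \<and> dist p < dist v) < dist v"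
    if "v \<in> V - {r}" for v
    using someI_ex[OF nxt[of v]] that by auto
  have "inj_on f (V - {r})"
  proof
    fix v1 v2 assume a: "v1 \<in> V - {r}" "v2 \<in> V - {r}" "f v1 = f v2"
    show "v1 = v2"
    proof (rule ccontr)
      assume ne: "v1 \<noteq> v2"
      define s1 where "s1 = (SOME p. adj E v1 p \<and> p \<in> V \<and> dist p < dist v1)"
      define s2 where "s2 = (SOME p. adj E v2 p \<and> p \<in> V \<and> dist p < dist v2)"
      have "{v1, s1} = {v2, s2}" using a(3) unfolding f_def s1_def s2_def by simp
      then have "v1 = s2 \<and> v2 = s1" using ne by (metis doubleton_eq_iff)
      moreover have "dist s1 < dist v1" using fprop[OF a(1)] unfolding s1_def by blast
      moreover have "dist s2 < dist v2" using fprop[OF a(2)] unfolding s2_def by blast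
      ultimately show False by auto
    qed
  qed
  moreover have "f ` (V - {r}) \<subseteq> E"
  proof
    fix e assume "e \<in> f ` (V - {r})"
    then obtain v where v: "v \<in> V - {r}" "e = f v" by blast
    then show "e \<in> E" using fprop[OF v(1)] unfolding f_def adj_def by simp
  qed
  moreover have "finite E" using finite_E fin EV by blast
  ultimately have "card (V - {r}) \<le> card E" by (meson card_inj_on_le)
  moreover have "card (V - {r}) = card V - 1" using r fin by (simp add: card_Diff_singleton)
  ultimately show ?thesis by linarith
qed

lemma no_triangle:
  assumes T: "is_tree V E" and e1: "{w, x} \<in> E" and e2: "{x, y} \<in> E" and e3: "{w, y} \<in> E"
    and d: "w \<noteq> x" "x \<noteq> y" "w \<noteq> y"
  shows False
proof -
  let ?E = "E - {{w, y}}"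
  have TT: "finite V \<and> V \<noteq> {} \<and> E \<subseteq> pairs V \<and>
     (\<forall>u\<in>V. \<forall>v\<in>V. (u, v) \<in> {(x, y). adj E x y}\<^sup>*) \<and> card E = card V - 1"
    using T[unfolded is_tree_def pairs_def[symmetric]] .
  note TT1 = conjunct1[OF TT] conjunct2[OF TT]
  note TT2 = conjunct1[OF TT1(2)] conjunct2[OF TT1(2)]
  note TT3 = conjunct1[OF TT2(2)] conjunct2[OF TT2(2)]
  note TT4 = conjunct1[OF TT3(2)] conjunct2[OF TT3(2)]
  have fin: "finite V" and ne: "V \<noteq> {}" and EV: "E \<subseteq> pairs V"
    and conn: "\<forall>u\<in>V. \<forall>v\<in>V. (u, v) \<in> {(x, y). adj E x y}\<^sup>*" and c: "card E = card V - 1"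
    by (fact TT1(1), fact TT2(1), fact TT3(1), fact TT4(1), fact TT4(2))
  have sub: "{(p, q). adj E p q} \<subseteq> {(p, q). adj ?E p q}\<^sup>*"
  proof (rule subsetI)
    fix z assume "z \<in> {(p, q). adj E p q}"
    then obtain p q where z: "z = (p, q)" and pq: "adj E p q" by blast
    have "(p, q) \<in> {(p, q). adj ?E p q}\<^sup>*"
    proof (cases "{p, q} = {w, y}")
      case False
      then have "adj ?E p q" using pq unfolding adj_def by blast
      then show ?thesis by (intro r_into_rtrancl) simp
    next
      case True
      have c1: "{x, w} = {w, x}" "{y, x} = {x, y}" by auto
      have ne1: "{w, x} \<noteq> {w, y}" "{x, y} \<noteq> {w, y}" using d by (auto simp: doubleton_eq_iff)
      have a1: "adj ?E w x" "adj ?E x w" "adj ?E x y" "adj ?E y x"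
        unfolding adj_def c1 using e1 e2 d ne1 by blast+
      have "(w, y) \<in> {(p, q). adj ?E p q}\<^sup>*"
        by (rule rtrancl_into_rtrancl[OF r_into_rtrancl]) (use a1 in simp_all)
      moreover have "(y, w) \<in> {(p, q). adj ?E p q}\<^sup>*"
        by (rule rtrancl_into_rtrancl[OF r_into_rtrancl]) (use a1 in simp_all)
      moreover have "(p = w \<and> q = y) \<or> (p = y \<and> q = w)" using True by (simp add: doubleton_eq_iff)
      ultimately show ?thesis by blast
    qed
    then show "z \<in> {(p, q). adj ?E p q}\<^sup>*" using z by simp
  qed
  have conn2: "\<forall>u\<in>V. \<forall>v\<in>V. (u, v) \<in> {(x, y). adj ?E x y}\<^sup>*"
    using conn rtrancl_subset_rtrancl[OF sub] by blast
  obtain r where r: "r \<in> V" using ne by auto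
  have "card V \<le> card ?E + 1"
    by (rule conn_count[OF fin r _ conn2]) (use EV in auto)
  moreover have "card ?E = card E - 1" using e3 by auto
  moreover have "card E \<ge> 1" using e3 finite_E[OF fin EV] by (metis One_nat_def Suc_leI card_gt_0_iff empty_iff)
  ultimately show False using c ne fin by (simp add: card_gt_0_iff) 
qed

definition subdiv :: "'a set set \<Rightarrow> 'a \<Rightarrow> 'a \<Rightarrow> 'a \<Rightarrow> 'a set set" where
  "subdiv E a b x = insert {a, x} (insert {x, b} (E - {{a, b}}))"

locale sdv =
  fixes E0 :: "'a set set" and a b x :: 'a
  assumes finE: "finite E0" and ab: "{a, b} \<in> E0" and anb: "a \<noteq> b"
    and xnot: "\<forall>e\<in>E0. x \<notin> e"
    and two: "\<forall>e\<in>E0. \<exists>p q. p \<noteq> q \<and> e = {p, q}"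
begin

abbreviation "E1 \<equiv> subdiv E0 a b x"

lemma anx: "a \<noteq> x" and bnx: "b \<noteq> x"
  using xnot ab by auto

lemma ax_notin: "{a, x} \<notin> E0" and xb_notin: "{x, b} \<notin> E0"
  using xnot by auto

lemma ab_notin1: "{a, b} \<notin> E1"
  using anx bnx anb unfolding subdiv_def by (auto simp: doubleton_eq_iff)

lemma adj1_iff: "adj E1 p q \<longleftrightarrow> (adj E0 p q \<and> {p, q} \<noteq> {a, b}) \<or> {p, q} = {a, x} \<or> {p, q} = {x, b}"
  unfolding adj_def subdiv_def using anx bnx by (auto simp: doubleton_eq_iff)

lemma adj1_x: "adj E1 x q \<Longrightarrow> q = a \<or> q = b"
  unfolding adj_def subdiv_def using xnot by (auto simp: doubleton_eq_iff)

lemma adj1_nox: "p \<noteq> x \<Longrightarrow> q \<noteq> x \<Longrightarrow> adj E1 p q \<longleftrightarrow> adj E0 p q \<and> {p, q} \<noteq> {a, b}"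
  unfolding adj1_iff by (auto simp: doubleton_eq_iff)

lemma adj0_nox: "adj E0 p q \<Longrightarrow> p \<noteq> x \<and> q \<noteq> x"
  unfolding adj_def using xnot by auto

lemma deg1_x: "deg E1 x = 2"
proof -
  have "{e \<in> E1. x \<in> e} = {{a, x}, {x, b}}"
    unfolding subdiv_def using xnot by auto
  moreover have "{a, x} \<noteq> {x, b}" using anb anx bnx by (auto simp: doubleton_eq_iff)
  ultimately show ?thesis unfolding deg_def by simp
qed

lemma deg1_other:
  assumes "z \<noteq> x" shows "deg E1 z = deg E0 z"
proof (cases "z = a \<or> z = b")
  case False
  then have "{e \<in> E1. z \<in> e} = {e \<in> E0. z \<in> e}"
    unfolding subdiv_def using assms by auto
  then show ?thesis unfolding deg_def by simp
next
  case True
  let ?A = "{e \<in> E0. z \<in> e}"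
  define c where "c = (if z = a then {a, x} else {x, b})"
  have "{e \<in> E1. z \<in> e} = insert c (?A - {{a, b}})"
    unfolding subdiv_def c_def using assms True anb anx bnx by auto
  moreover have "c \<notin> ?A - {{a, b}}" using ax_notin xb_notin unfolding c_def by auto
  moreover have "{a, b} \<in> ?A" using ab True by auto
  moreover have "finite ?A" using finE by auto
  ultimately have "card {e \<in> E1. z \<in> e} = Suc (card (?A - {{a, b}}))"
    by simp
  also have "\<dots> = card ?A" using card_Suc_Diff1[OF \<open>finite ?A\<close> \<open>{a, b} \<in> ?A\<close>] .
  finally have "card {e \<in> E1. z \<in> e} = card ?A" .
  then show ?thesis unfolding deg_def by simp
qed

end

lemma adj_sym: "adj E u v \<longleftrightarrow> adj E v u"
  unfolding adj_def by (auto simp: insert_commute)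

lemma nth_del:
  assumes "j < length p" "i < length p - 1"
  shows "(take j p @ drop (Suc j) p) ! i = (if i < j then p ! i else p ! Suc i)"
  using assms by (auto simp: nth_append min_def)

lemma len_del: "j < length p \<Longrightarrow> length (take j p @ drop (Suc j) p) = length p - 1"
  by auto

lemma set_del: "distinct p \<Longrightarrow> j < length p \<Longrightarrow> set (take j p @ drop (Suc j) p) = set p - {p ! j}"
proof -
  assume d: "distinct p" and j: "j < length p"
  have e: "p = take j p @ p ! j # drop (Suc j) p" using j by (simp add: id_take_nth_drop)
  have "distinct (take j p @ p ! j # drop (Suc j) p)" using d e by simp
  then show ?thesis by (subst (2) e) auto
qed

lemma distinct_del: "distinct p \<Longrightarrow> distinct (take j p @ drop (Suc j) p)"
proof -
  assume d: "distinct p"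
  have "distinct (take j p @ drop j p)" using d by simp
  then have h: "distinct (take j p)" "distinct (drop j p)" "set (take j p) \<inter> set (drop j p) = {}"
    unfolding distinct_append by blast+
  have e: "drop (Suc j) p = tl (drop j p)" by (simp add: drop_Suc tl_drop)
  have s: "set (tl xs) \<subseteq> set xs" for xs :: "'a list" by (cases xs) auto
  show ?thesis unfolding e using h s[of "drop j p"] distinct_tl[OF h(2)] by auto
qed

lemma nth_ins:
  assumes "i < length p" "m < Suc (length p)"
  shows "(take (Suc i) p @ x # drop (Suc i) p) ! m =
    (if m \<le> i then p ! m else if m = Suc i then x else p ! (m - 1))"
  using assms apply (auto simp: nth_append min_def nth_Cons split: nat.split)
  apply (rule arg_cong[where f="(!) p"]) by arith

lemma consec_unique:
  assumes "distinct p" "i < length p - 1" "m < length p - 1"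
    and "{p ! m, p ! Suc m} = {p ! i, p ! Suc i}"
  shows "m = i"
proof -
  have l: "m < length p" "Suc m < length p" "i < length p" "Suc i < length p" using assms by auto
  from assms(4) have "(p ! m = p ! i \<and> p ! Suc m = p ! Suc i) \<or> (p ! m = p ! Suc i \<and> p ! Suc m = p ! i)"
    by (simp add: doubleton_eq_iff)
  then have "(m = i \<and> Suc m = Suc i) \<or> (m = Suc i \<and> Suc m = i)"
    by (simp add: nth_eq_iff_index_eq[OF assms(1)] l)
  then show ?thesis by arith
qed

lemma seg_basic:
  assumes "is_segment E p"
  shows "length p \<ge> 2" "distinct p" "\<And>i. i < length p - 1 \<Longrightarrow> adj E (p ! i) (p ! Suc i)"
    "deg E (p ! 0) \<noteq> 2" "deg E (p ! (length p - 1)) \<noteq> 2"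
    "\<And>i. 0 < i \<Longrightarrow> i < length p - 1 \<Longrightarrow> deg E (p ! i) = 2"
proof -
  have ne: "p \<noteq> []" using assms unfolding is_segment_def by auto
  show "length p \<ge> 2" "distinct p" "\<And>i. i < length p - 1 \<Longrightarrow> adj E (p ! i) (p ! Suc i)"
    "\<And>i. 0 < i \<Longrightarrow> i < length p - 1 \<Longrightarrow> deg E (p ! i) = 2"
    using assms unfolding is_segment_def by auto
  show "deg E (p ! 0) \<noteq> 2" "deg E (p ! (length p - 1)) \<noteq> 2"
    using assms ne unfolding is_segment_def by (auto simp: hd_conv_nth last_conv_nth)
qed

lemma seg_intro:
  assumes "length p \<ge> 2" "distinct p" "\<And>i. i < length p - 1 \<Longrightarrow> adj E (p ! i) (p ! Suc i)"
    "deg E (p ! 0) \<noteq> 2" "deg E (p ! (length p - 1)) \<noteq> 2"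
    "\<And>i. 0 < i \<Longrightarrow> i < length p - 1 \<Longrightarrow> deg E (p ! i) = 2"
  shows "is_segment E p"
proof -
  have ne: "p \<noteq> []" using assms by auto
  show ?thesis using assms ne unfolding is_segment_def by (auto simp: hd_conv_nth last_conv_nth)
qed

lemma seg_ends:
  assumes "is_segment E p" "i < length p" "deg E (p ! i) \<noteq> 2"
  shows "i = 0 \<or> i = length p - 1"
  using seg_basic(6)[OF assms(1), of i] assms by linarith

lemma seg_adj_elem:
  assumes "is_segment E p" "i < length p"
  shows "\<exists>q. adj E (p ! i) q"
proof (cases "i < length p - 1")
  case True then show ?thesis using seg_basic(3)[OF assms(1)] by blast
next
  case False
  then have "i = Suc (i - 1)" "i - 1 < length p - 1" using seg_basic(1)[OF assms(1)] assms(2) by auto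
  then have "adj E (p ! (i - 1)) (p ! i)" using seg_basic(3)[OF assms(1), of "i - 1"] by metis
  then show ?thesis using adj_sym by metis
qed

lemma three_nbrs:
  assumes "deg E c = 2" "{c, p1} \<in> E" "{c, p2} \<in> E" "{c, q} \<in> E"
    and "p1 \<noteq> p2" "p1 \<noteq> c" "p2 \<noteq> c" "q \<noteq> c"
  shows "q = p1 \<or> q = p2"
proof (rule ccontr)
  assume "\<not> (q = p1 \<or> q = p2)"
  then have d: "{c, p1} \<noteq> {c, p2}" "{c, p1} \<noteq> {c, q}" "{c, p2} \<noteq> {c, q}"
    using assms by (auto simp: doubleton_eq_iff)
  have fin: "finite {e \<in> E. c \<in> e}" using assms(1) unfolding deg_def by (metis card.infinite zero_neq_numeral)
  have "{{c, p1}, {c, p2}, {c, q}} \<subseteq> {e \<in> E. c \<in> e}" using assms by auto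
  then have "card {{c, p1}, {c, p2}, {c, q}} \<le> 2" using card_mono[OF fin] assms(1) unfolding deg_def by metis
  moreover have "card {{c, p1}, {c, p2}, {c, q}} = 3" using d by auto
  ultimately show False by simp
qed

lemma seg_nbr:
  assumes sp: "is_segment E p" and cd: "{c, d} \<in> E" "c \<noteq> d" and c: "c \<in> set p" and dc: "deg E c = 2"
  shows "\<exists>i < length p - 1. {p ! i, p ! Suc i} = {c, d}"
proof -
  obtain i where i: "i < length p" "p ! i = c" using c by (metis in_set_conv_nth)
  have pos: "0 < i" "i < length p - 1" using seg_basic(4,5)[OF sp] i dc
    by (metis gr0I, metis Suc_pred' diff_less_Suc less_Suc_eq zero_less_Suc less_nat_zero_code not_less_eq)
  have a1: "adj E (p ! (i - 1)) (p ! i)" using seg_basic(3)[OF sp, of "i - 1"] pos by auto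
  have a2: "adj E (p ! i) (p ! Suc i)" using seg_basic(3)[OF sp, of i] pos by auto
  have ne: "p ! (i - 1) \<noteq> p ! Suc i" using seg_basic(2)[OF sp] pos nth_eq_iff_index_eq by fastforce
  have "d = p ! (i - 1) \<or> d = p ! Suc i"
    apply (rule three_nbrs[OF dc])
    using a1 a2 cd i ne unfolding adj_def by (auto simp: insert_commute)
  then show ?thesis
  proof
    assume "d = p ! (i - 1)"
    then have "{p ! (i - 1), p ! Suc (i - 1)} = {c, d}" using i pos by (auto simp: insert_commute)
    then show ?thesis using pos by (metis less_imp_diff_less)
  next
    assume "d = p ! Suc i"
    then show ?thesis using i pos by auto
  qed
qed

context sdv begin

abbreviation consec :: "'a list \<Rightarrow> bool" where
  "consec p \<equiv> \<exists>i < length p - 1. {p ! i, p ! Suc i} = {a, b}"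

lemma seg0_nox: assumes "is_segment E0 p" shows "x \<notin> set p"
proof
  assume "x \<in> set p"
  then obtain i where "i < length p" "p ! i = x" by (metis in_set_conv_nth)
  then show False using seg_adj_elem[OF assms] adj0_nox by metis
qed

lemma segA:
  assumes sp: "is_segment E1 p" and nx: "x \<notin> set p"
  shows "is_segment E0 p \<and> \<not> consec p"
proof -
  have nxi: "p ! i \<noteq> x" if "i < length p" for i using nx that nth_mem by metis
  have adj: "adj E0 (p ! i) (p ! Suc i) \<and> {p ! i, p ! Suc i} \<noteq> {a, b}" if "i < length p - 1" for i
    using seg_basic(3)[OF sp that] adj1_nox[OF nxi nxi, of i "Suc i"] that by auto
  have "is_segment E0 p"
  proof (rule seg_intro)
    show "2 \<le> length p" "distinct p" using seg_basic[OF sp] by auto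
    show "adj E0 (p ! i) (p ! Suc i)" if "i < length p - 1" for i using adj that by blast
    have l: "0 < length p" "length p - 1 < length p" using seg_basic(1)[OF sp] by auto
    show "deg E0 (p ! 0) \<noteq> 2" using seg_basic(4)[OF sp] deg1_other[OF nxi[OF l(1)]] by simp
    show "deg E0 (p ! (length p - 1)) \<noteq> 2"
      using seg_basic(5)[OF sp] deg1_other[OF nxi[OF l(2)]] by simp
    show "deg E0 (p ! i) = 2" if "0 < i" "i < length p - 1" for i
      using seg_basic(6)[OF sp that] deg1_other[OF nxi, of i] that by simp
  qed
  moreover have "\<not> consec p" using adj by blast
  ultimately show ?thesis by blast
qed

lemma segB:
  assumes sp: "is_segment E0 p" and nc: "\<not> consec p"
  shows "is_segment E1 p"
proof -
  have nx: "x \<notin> set p" using seg0_nox[OF sp] .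
  have nxi: "p ! i \<noteq> x" if "i < length p" for i using nx that nth_mem by metis
  show "is_segment E1 p"
  proof (rule seg_intro)
    show "2 \<le> length p" "distinct p" using seg_basic[OF sp] by auto
    show "adj E1 (p ! i) (p ! Suc i)" if "i < length p - 1" for i
      using seg_basic(3)[OF sp that] adj1_nox[OF nxi nxi, of i "Suc i"] that nc by auto
    have l: "0 < length p" "length p - 1 < length p" using seg_basic(1)[OF sp] by auto
    show "deg E1 (p ! 0) \<noteq> 2" using seg_basic(4)[OF sp] deg1_other[OF nxi[OF l(1)]] by simp
    show "deg E1 (p ! (length p - 1)) \<noteq> 2"
      using seg_basic(5)[OF sp] deg1_other[OF nxi[OF l(2)]] by simp
    show "deg E1 (p ! i) = 2" if "0 < i" "i < length p - 1" for i
      using seg_basic(6)[OF sp that] deg1_other[OF nxi, of i] that by simp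
  qed
qed

lemma segK:
  assumes sp: "is_segment E0 p"
  shows "consec p \<longleftrightarrow> a \<in> set p \<and> b \<in> set p \<and> (deg E0 a = 2 \<or> deg E0 b = 2 \<or> card (set p) = 2)"
proof
  assume "consec p"
  then obtain i where i: "i < length p - 1" "{p ! i, p ! Suc i} = {a, b}" by blast
  have l: "i < length p" "Suc i < length p" using i by auto
  have ab_in: "a \<in> set p" "b \<in> set p" using i(2) nth_mem[OF l(1)] nth_mem[OF l(2)]
    by (auto simp: doubleton_eq_iff)
  have "deg E0 a = 2 \<or> deg E0 b = 2 \<or> card (set p) = 2"
  proof (rule ccontr)
    assume "\<not> ?thesis"
    then have "deg E0 (p ! i) \<noteq> 2" "deg E0 (p ! Suc i) \<noteq> 2" using i(2)
      by (auto simp: doubleton_eq_iff)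
    then have "i = 0" "Suc i = length p - 1"
      using seg_ends[OF sp l(1)] seg_ends[OF sp l(2)] i(1) by auto
    then have "length p = 2" by auto
    then have "card (set p) = 2" using distinct_card[OF seg_basic(2)[OF sp]] by simp
    with \<open>\<not> ?thesis\<close> show False by simp
  qed
  then show "a \<in> set p \<and> b \<in> set p \<and> (deg E0 a = 2 \<or> deg E0 b = 2 \<or> card (set p) = 2)"
    using ab_in by blast
next
  assume h: "a \<in> set p \<and> b \<in> set p \<and> (deg E0 a = 2 \<or> deg E0 b = 2 \<or> card (set p) = 2)"
  then consider "deg E0 a = 2" | "deg E0 b = 2" | "card (set p) = 2" by blast
  then show "consec p"
  proof cases
    case 1
    show ?thesis using seg_nbr[OF sp ab anb _ 1] h by blast
  next
    case 2
    have "{b, a} \<in> E0" using ab by (simp add: insert_commute)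
    then obtain i where "i < length p - 1" "{p ! i, p ! Suc i} = {b, a}"
      using seg_nbr[OF sp _ _ _ 2] anb h by metis
    then show ?thesis by (auto simp: insert_commute)
  next
    case 3
    have "length p = 2" using distinct_card[OF seg_basic(2)[OF sp]] 3 by simp
    then have "set p = {p ! 0, p ! Suc 0}"
      by (cases p; cases "tl p"; auto)
    then have "{p ! 0, p ! Suc 0} = {a, b}" using h 3 anb
      by (metis card_2_iff doubleton_eq_iff insertE singletonD)
    then show ?thesis using \<open>length p = 2\<close> by auto
  qed
qed

end

context sdv begin

lemma segDel:
  assumes sp: "is_segment E1 p" and xp: "x \<in> set p"
  shows "\<exists>q. is_segment E0 q \<and> consec q \<and> set q = set p - {x}"
proof -
  obtain j where j: "j < length p" "p ! j = x" using xp by (metis in_set_conv_nth)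
  have d: "distinct p" using seg_basic(2)[OF sp] .
  have L: "length p \<ge> 2" using seg_basic(1)[OF sp] .
  have "j \<noteq> 0"
  proof
    assume "j = 0" then have "p ! 0 = x" using j by simp
    then show False using seg_basic(4)[OF sp] deg1_x by simp
  qed
  moreover have "j \<noteq> length p - 1"
  proof
    assume "j = length p - 1" then have "p ! (length p - 1) = x" using j by simp
    then show False using seg_basic(5)[OF sp] deg1_x by simp
  qed
  ultimately have jpos: "0 < j" "j < length p - 1" using j(1) by auto
  have a1: "adj E1 (p ! (j - 1)) x" using seg_basic(3)[OF sp, of "j - 1"] jpos j by auto
  have a2: "adj E1 x (p ! Suc j)" using seg_basic(3)[OF sp, of j] jpos j by auto
  have n1: "p ! (j - 1) = a \<or> p ! (j - 1) = b" using adj1_x a1 adj_sym by metis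
  have n2: "p ! Suc j = a \<or> p ! Suc j = b" using adj1_x a2 by metis
  have ne: "p ! (j - 1) \<noteq> p ! Suc j" using d jpos nth_eq_iff_index_eq by fastforce
  have nb: "{p ! (j - 1), p ! Suc j} = {a, b}" using n1 n2 ne by auto
  define q where "q = take j p @ drop (Suc j) p"
  have lq: "length q = length p - 1" unfolding q_def using j by auto
  have qn: "q ! i = (if i < j then p ! i else p ! Suc i)" if "i < length p - 1" for i
    unfolding q_def using nth_del[OF j(1) that] .
  have dq: "distinct q" unfolding q_def using distinct_del[OF d] .
  have sq: "set q = set p - {x}" unfolding q_def using set_del[OF d j(1)] j by simp
  have pnx: "p ! i \<noteq> x" if "i < length p" "i \<noteq> j" for i
    using that j d nth_eq_iff_index_eq by metis
  have adjp: "adj E0 (p ! i) (p ! Suc i)" if "i < length p - 1" "i \<noteq> j" "Suc i \<noteq> j" for i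
    using seg_basic(3)[OF sp that(1)] adj1_nox[OF pnx pnx, of i "Suc i"] that by auto
  have abadj: "adj E0 a b" using ab anb unfolding adj_def by simp
  have "is_segment E0 q"
  proof (rule seg_intro)
    show "2 \<le> length q" using lq jpos by auto
    show "distinct q" by (fact dq)
    show "adj E0 (q ! i) (q ! Suc i)" if "i < length q - 1" for i
    proof -
      consider "Suc i < j" | "Suc i = j" | "j \<le> i" by linarith
      then show ?thesis
      proof cases
        case 1 then show ?thesis using qn[of i] qn[of "Suc i"] that lq adjp[of i] by auto
      next
        case 2
        then have "q ! i = p ! (j - 1)" "q ! Suc i = p ! Suc j" using qn[of i] qn[of "Suc i"] that lq by auto
        then show ?thesis using nb abadj adj_sym by (metis doubleton_eq_iff)
      next
        case 3 then show ?thesis using qn[of i] qn[of "Suc i"] that lq adjp[of "Suc i"] by auto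
      qed
    qed
    have l0: "0 < length p" using L by linarith
    have "p ! 0 \<noteq> x" using pnx[OF l0] jpos by auto
    moreover have "q ! 0 = p ! 0" using qn[of 0] jpos by auto
    ultimately show "deg E0 (q ! 0) \<noteq> 2"
      using seg_basic(4)[OF sp] deg1_other by metis
    have e1: "Suc (length p - 2) = length p - 1" using jpos by arith
    have m1: "length q - 1 = length p - 2" using lq by simp
    have m2: "\<not> (length p - 2 < j)" "length p - 2 < length p - 1" using jpos by arith+
    have "q ! (length p - 2) = p ! Suc (length p - 2)" using qn[OF m2(2)] m2(1) by presburger
    then have "q ! (length q - 1) = p ! Suc (length p - 2)" using m1 by metis
    then have "q ! (length q - 1) = p ! (length p - 1)" using e1 by simp
    then show "deg E0 (q ! (length q - 1)) \<noteq> 2"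
      using seg_basic(5)[OF sp] deg1_other[OF pnx[of "length p - 1"]] jpos by auto
    show "deg E0 (q ! i) = 2" if "0 < i" "i < length q - 1" for i
    proof (cases "i < j")
      case True then show ?thesis using qn[of i] that lq seg_basic(6)[OF sp, of i] deg1_other[OF pnx[of i]] by auto
    next
      case False then show ?thesis
        using qn[of i] that lq seg_basic(6)[OF sp, of "Suc i"] deg1_other[OF pnx[of "Suc i"]] by auto
    qed
  qed
  moreover have "consec q"
  proof -
    have "q ! (j - 1) = p ! (j - 1)" "q ! Suc (j - 1) = p ! Suc j" using qn[of "j - 1"] qn[of j] jpos by auto
    then have "{q ! (j - 1), q ! Suc (j - 1)} = {a, b}" using nb by simp
    moreover have "j - 1 < length q - 1" using lq jpos by auto
    ultimately show ?thesis by blast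
  qed
  ultimately show ?thesis using sq by blast
qed

lemma segIns:
  assumes sp: "is_segment E0 p" and cp: "consec p"
  shows "\<exists>q. is_segment E1 q \<and> set q = insert x (set p)"
proof -
  obtain i where i: "i < length p - 1" "{p ! i, p ! Suc i} = {a, b}" using cp by blast
  have d: "distinct p" using seg_basic(2)[OF sp] .
  have L: "length p \<ge> 2" using seg_basic(1)[OF sp] .
  have nx: "x \<notin> set p" using seg0_nox[OF sp] .
  have pnx: "p ! m \<noteq> x" if "m < length p" for m using nx that nth_mem by metis
  define q where "q = take (Suc i) p @ x # drop (Suc i) p"
  have lq: "length q = Suc (length p)" unfolding q_def using i by auto
  have qn: "q ! m = (if m \<le> i then p ! m else if m = Suc i then x else p ! (m - 1))"
    if "m < Suc (length p)" for m
    unfolding q_def using nth_ins[OF _ that, of i x] i by auto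
  have dq: "distinct q"
  proof -
    have "distinct (take (Suc i) p @ drop (Suc i) p)" using d by simp
    then have h: "distinct (take (Suc i) p)" "distinct (drop (Suc i) p)"
      "set (take (Suc i) p) \<inter> set (drop (Suc i) p) = {}"
      unfolding distinct_append by blast+
    have "x \<notin> set (take (Suc i) p)" "x \<notin> set (drop (Suc i) p)"
      using nx set_take_subset set_drop_subset by fastforce+
    then show ?thesis unfolding q_def using h by auto
  qed
  have sq: "set q = insert x (set p)" unfolding q_def
    by (metis Un_insert_right append_take_drop_id list.simps(15) set_append)
  have adjp: "adj E1 (p ! m) (p ! Suc m)" if "m < length p - 1" "m \<noteq> i" for m
  proof -
    have "{p ! m, p ! Suc m} \<noteq> {a, b}" using consec_unique[OF d i(1) that(1)] i(2) that(2) by auto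
    then show ?thesis using seg_basic(3)[OF sp that(1)] adj1_iff by blast
  qed
  have pi: "p ! i = a \<or> p ! i = b" "p ! Suc i = a \<or> p ! Suc i = b" using i(2) by (auto simp: doubleton_eq_iff)
  have "is_segment E1 q"
  proof (rule seg_intro)
    show "2 \<le> length q" using lq L by auto
    show "distinct q" by (fact dq)
    show "adj E1 (q ! m) (q ! Suc m)" if "m < length q - 1" for m
    proof -
      consider "m < i" | "m = i" | "m = Suc i" | "Suc i < m" by linarith
      then show ?thesis
      proof cases
        case 1 then show ?thesis using qn[of m] qn[of "Suc m"] that lq adjp[of m] i by auto
      next
        case 2
        then have "q ! m = p ! i" "q ! Suc m = x" using qn[of m] qn[of "Suc m"] that lq by auto
        then show ?thesis using pi(1) adj1_iff by (auto simp: insert_commute)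
      next
        case 3
        then have "q ! m = x" "q ! Suc m = p ! Suc i" using qn[of m] qn[of "Suc m"] that lq by auto
        then show ?thesis using pi(2) adj1_iff by (auto simp: insert_commute)
      next
        case 4
        then have "q ! m = p ! (m - 1)" "q ! Suc m = p ! Suc (m - 1)" using qn[of m] qn[of "Suc m"] that lq by auto
        then show ?thesis using adjp[of "m - 1"] that lq 4 by auto
      qed
    qed
    have l0: "0 < length p" using L by linarith
    have "p ! 0 \<noteq> x" using pnx[OF l0] .
    moreover have "q ! 0 = p ! 0" using qn[of 0] by auto
    ultimately show "deg E1 (q ! 0) \<noteq> 2"
      using seg_basic(4)[OF sp] deg1_other by metis
    have "q ! (length q - 1) = p ! (length p - 1)" using qn[of "length q - 1"] lq i by auto
    then show "deg E1 (q ! (length q - 1)) \<noteq> 2"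
      using seg_basic(5)[OF sp] deg1_other[OF pnx[of "length p - 1"]] L by auto
    show "deg E1 (q ! m) = 2" if "0 < m" "m < length q - 1" for m
    proof -
      consider "m \<le> i" | "m = Suc i" | "Suc i < m" by linarith
      then show ?thesis
      proof cases
        case 1 then show ?thesis using qn[of m] that lq i seg_basic(6)[OF sp, of m] deg1_other[OF pnx[of m]] by auto
      next
        case 2 then show ?thesis using qn[of m] that lq deg1_x by auto
      next
        case 3 then show ?thesis
          using qn[of m] that lq seg_basic(6)[OF sp, of "m - 1"] deg1_other[OF pnx[of "m - 1"]] by auto
      qed
    qed
  qed
  then show ?thesis using sq by blast
qed

lemma num_seg_eq: "num_segments E1 = num_segments E0"
proof -
  let ?S1 = "{set p | p. is_segment E1 p}"
  let ?S0 = "{set p | p. is_segment E0 p}"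
  let ?g = "\<lambda>s. s - {x}"
  have inj: "inj_on ?g ?S1"
  proof
    fix s t assume s: "s \<in> ?S1" and t: "t \<in> ?S1" and st: "s - {x} = t - {x}"
    have key: False if s: "s \<in> ?S1" and t: "t \<in> ?S1" and st: "s - {x} = t - {x}"
      and xs: "x \<in> s" and xt: "x \<notin> t" for s t
    proof -
      obtain p where p: "s = set p" "is_segment E1 p" using s by blast
      obtain r where r: "t = set r" "is_segment E1 r" using t by blast
      obtain q where q: "is_segment E0 q" "consec q" "set q = set p - {x}" using segDel[OF p(2)] xs p by blast
      have r0: "is_segment E0 r" "\<not> consec r" using segA[OF r(2)] xt r by auto
      have "set q = set r" using q(3) st p r xt by auto
      then show False using segK[OF q(1)] segK[OF r0(1)] q(2) r0(2) by simp
    qed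
    show "s = t"
    proof (cases "x \<in> s")
      case True
      then have "x \<in> t" using key[OF s t st] by blast
      then show ?thesis using True st by blast
    next
      case False
      then have "x \<notin> t" using key[OF t s st[symmetric]] by blast
      then show ?thesis using False st by blast
    qed
  qed
  have img: "?g ` ?S1 = ?S0"
  proof
    show "?g ` ?S1 \<subseteq> ?S0"
    proof
      fix s assume "s \<in> ?g ` ?S1"
      then obtain p where p: "s = set p - {x}" "is_segment E1 p" by blast
      show "s \<in> ?S0"
      proof (cases "x \<in> set p")
        case True then show ?thesis using segDel[OF p(2)] p(1) by blast
      next
        case False then show ?thesis using segA[OF p(2)] p(1) by blast
      qed
    qed
  next
    show "?S0 \<subseteq> ?g ` ?S1"
    proof
      fix s assume "s \<in> ?S0"
      then obtain p where p: "s = set p" "is_segment E0 p" by blast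
      have nx: "x \<notin> set p" using seg0_nox[OF p(2)] .
      show "s \<in> ?g ` ?S1"
      proof (cases "consec p")
        case True
        then obtain q where q: "is_segment E1 q" "set q = insert x (set p)" using segIns[OF p(2)] by blast
        then have "s = ?g (set q)" using p(1) nx by auto
        then show ?thesis using q(1) by blast
      next
        case False
        then have "is_segment E1 p" using segB[OF p(2)] by blast
        moreover have "s = ?g (set p)" using p(1) nx by auto
        ultimately show ?thesis by blast
      qed
    qed
  qed
  have "card ?S1 = card ?S0" using card_image[OF inj] img by simp
  then show ?thesis unfolding num_segments_def .
qed

end

context sdv begin

lemma card_E1: "card E1 = Suc (card E0)"
proof -
  have ne: "{a, x} \<noteq> {x, b}" using anb anx bnx by (auto simp: doubleton_eq_iff)
  have "card E1 = Suc (Suc (card (E0 - {{a, b}})))"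
    unfolding subdiv_def using ne ax_notin xb_notin finE by auto
  also have "Suc (card (E0 - {{a, b}})) = card E0" using card_Suc_Diff1[OF finE ab] .
  finally show ?thesis .
qed

lemma sum_E1: "sum f E1 + f {a, b} = sum f E0 + f {a, x} + f {x, b}"
proof -
  have ne: "{a, x} \<noteq> {x, b}" using anb anx bnx by (auto simp: doubleton_eq_iff)
  have "sum f E1 = f {a, x} + f {x, b} + sum f (E0 - {{a, b}})"
    unfolding subdiv_def using ne ax_notin xb_notin finE by (simp add: add.assoc)
  moreover have "sum f E0 = f {a, b} + sum f (E0 - {{a, b}})" using sum.remove[OF finE ab] .
  ultimately show ?thesis by (simp add: ac_simps)
qed

lemma conn_up:
  assumes conn: "\<forall>u\<in>V0. \<forall>v\<in>V0. (u, v) \<in> {(p, q). adj E0 p q}\<^sup>*" and aV: "a \<in> V0"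
  shows "\<forall>u\<in>insert x V0. \<forall>v\<in>insert x V0. (u, v) \<in> {(p, q). adj E1 p q}\<^sup>*"
proof -
  let ?R0 = "{(p, q). adj E0 p q}" and ?R1 = "{(p, q). adj E1 p q}"
  have ax1: "(a, x) \<in> ?R1" "(x, a) \<in> ?R1" "(x, b) \<in> ?R1" "(b, x) \<in> ?R1"
    using adj1_iff anx bnx unfolding adj_def by (auto simp: insert_commute)
  have sub: "?R0 \<subseteq> ?R1\<^sup>*"
  proof (rule subsetI)
    fix z assume "z \<in> ?R0"
    then obtain p q where z: "z = (p, q)" and pq: "adj E0 p q" by blast
    have "(p, q) \<in> ?R1\<^sup>*"
    proof (cases "{p, q} = {a, b}")
      case False
      then have "adj E1 p q" using pq adj1_iff by blast
      then show ?thesis by (intro r_into_rtrancl) simp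
    next
      case True
      have "(a, b) \<in> ?R1\<^sup>*" by (rule rtrancl_into_rtrancl[OF r_into_rtrancl]) (use ax1 in blast)+
      moreover have "(b, a) \<in> ?R1\<^sup>*" by (rule rtrancl_into_rtrancl[OF r_into_rtrancl]) (use ax1 in blast)+
      moreover have "(p = a \<and> q = b) \<or> (p = b \<and> q = a)" using True by (simp add: doubleton_eq_iff)
      ultimately show ?thesis by blast
    qed
    then show "z \<in> ?R1\<^sup>*" using z by simp
  qed
  have c0: "(u, v) \<in> ?R1\<^sup>*" if "u \<in> V0" "v \<in> V0" for u v
    using conn that rtrancl_subset_rtrancl[OF sub] by blast
  show ?thesis
  proof (intro ballI)
    fix u v assume u: "u \<in> insert x V0" and v: "v \<in> insert x V0"
    have ua: "(u, a) \<in> ?R1\<^sup>*"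
    proof (cases "u = x")
      case True then show ?thesis using ax1(2) by blast
    next
      case False then show ?thesis using c0 u aV by blast
    qed
    have av: "(a, v) \<in> ?R1\<^sup>*"
    proof (cases "v = x")
      case True then show ?thesis using ax1(1) by blast
    next
      case False then show ?thesis using c0 v aV by blast
    qed
    show "(u, v) \<in> ?R1\<^sup>*" using rtrancl_trans[OF ua av] .
  qed
qed

lemma conn_down:
  assumes xV0: "x \<notin> V0" and conn: "\<forall>u\<in>insert x V0. \<forall>v\<in>insert x V0. (u, v) \<in> {(p, q). adj E1 p q}\<^sup>*"
  shows "\<forall>u\<in>V0. \<forall>v\<in>V0. (u, v) \<in> {(p, q). adj E0 p q}\<^sup>*"
proof -
  let ?R0 = "{(p, q). adj E0 p q}" and ?R1 = "{(p, q). adj E1 p q}"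
  have abR: "(a, b) \<in> ?R0" "(b, a) \<in> ?R0" using ab anb unfolding adj_def by (auto simp: insert_commute)
  have gen: "(t \<noteq> x \<longrightarrow> (s, t) \<in> ?R0\<^sup>*) \<and> (t = x \<longrightarrow> (s, a) \<in> ?R0\<^sup>*)"
    if st: "(s, t) \<in> ?R1\<^sup>*" and sx: "s \<noteq> x" for s t
    using st
  proof (induction rule: rtrancl_induct)
    case base then show ?case using sx by simp
  next
    case (step t t')
    have a: "adj E1 t t'" using step.hyps(2) by simp
    show ?case
    proof (cases "t = x")
      case True
      then have t'ab: "t' = a \<or> t' = b" and t'x: "t' \<noteq> x" using adj1_x a unfolding adj_def by auto
      have sa: "(s, a) \<in> ?R0\<^sup>*" using step.IH True by simp
      have "(s, t') \<in> ?R0\<^sup>*"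
        using t'ab sa rtrancl_into_rtrancl[OF sa abR(1)] by blast
      then show ?thesis using t'x by simp
    next
      case False
      have st0: "(s, t) \<in> ?R0\<^sup>*" using step.IH False by simp
      show ?thesis
      proof (cases "t' = x")
        case True
        then have "t = a \<or> t = b" using adj1_x a adj_sym by metis
        then have "(s, a) \<in> ?R0\<^sup>*"
        proof
          assume "t = a" then show ?thesis using st0 by simp
        next
          assume "t = b" then show ?thesis using rtrancl_into_rtrancl[OF _ abR(2)] st0 by simp
        qed
        then show ?thesis using True by simp
      next
        case False
        then have "adj E0 t t'" using adj1_nox[OF \<open>t \<noteq> x\<close> False] a by simp
        then have "(s, t') \<in> ?R0\<^sup>*" using rtrancl_into_rtrancl[OF st0] by simp
        then show ?thesis using False by simp
      qed
    qed
  qed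
  show ?thesis
  proof (intro ballI)
    fix u v assume u: "u \<in> V0" and v: "v \<in> V0"
    have nx: "u \<noteq> x" "v \<noteq> x" using u v xV0 by auto
    show "(u, v) \<in> ?R0\<^sup>*" using gen[of u v] conn u v nx by blast
  qed
qed

lemma tree_iff:
  assumes xV0: "x \<notin> V0" and EV: "E0 \<subseteq> pairs V0"
  shows "is_tree (insert x V0) E1 \<longleftrightarrow> is_tree V0 E0"
proof -
  have aV: "a \<in> V0" and bV: "b \<in> V0" using edge_mem[OF EV ab] by auto
  have EV1: "E1 \<subseteq> pairs (insert x V0)"
    using EV aV bV anx bnx unfolding subdiv_def pairs_def by blast
  have c1: "card E1 = Suc (card E0)" by (rule card_E1)
  show ?thesis
  proof
    assume T: "is_tree (insert x V0) E1"
    have TT: "finite (insert x V0) \<and> insert x V0 \<noteq> {} \<and> E1 \<subseteq> pairs (insert x V0) \<and>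
     (\<forall>u\<in>insert x V0. \<forall>v\<in>insert x V0. (u, v) \<in> {(x, y). adj E1 x y}\<^sup>*) \<and> card E1 = card (insert x V0) - 1"
      using T[unfolded is_tree_def pairs_def[symmetric]] .
    have fin: "finite V0" using conjunct1[OF TT] by simp
    have conn: "\<forall>u\<in>insert x V0. \<forall>v\<in>insert x V0. (u, v) \<in> {(x, y). adj E1 x y}\<^sup>*"
      using TT by blast
    have cc: "card E1 = card (insert x V0) - 1" using TT by blast
    have "card V0 > 0" using fin aV card_gt_0_iff by blast
    then have "card E0 = card V0 - 1" using cc c1 fin xV0 by simp
    then show "is_tree V0 E0"
      unfolding is_tree_def pairs_def[symmetric] using fin aV EV conn_down[OF xV0 conn] by blast
  next
    assume T: "is_tree V0 E0"
    have TT: "finite V0 \<and> V0 \<noteq> {} \<and> E0 \<subseteq> pairs V0 \<and>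
     (\<forall>u\<in>V0. \<forall>v\<in>V0. (u, v) \<in> {(x, y). adj E0 x y}\<^sup>*) \<and> card E0 = card V0 - 1"
      using T[unfolded is_tree_def pairs_def[symmetric]] .
    have fin: "finite V0" using conjunct1[OF TT] by simp
    have conn: "\<forall>u\<in>V0. \<forall>v\<in>V0. (u, v) \<in> {(x, y). adj E0 x y}\<^sup>*" using TT by blast
    have cc: "card E0 = card V0 - 1" using TT by blast
    have "card V0 > 0" using fin aV card_gt_0_iff by blast
    then have "card E1 = card (insert x V0) - 1" using cc c1 fin xV0 by simp
    then show "is_tree (insert x V0) E1"
      unfolding is_tree_def pairs_def[symmetric] using fin EV1 conn_up[OF conn aV] by blast
  qed
qed

end

lemma pairs_two: "e \<in> pairs V \<Longrightarrow> \<exists>p q. p \<noteq> q \<and> e = {p, q}"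
  unfolding pairs_def by auto

lemma P2: "p \<noteq> q \<Longrightarrow> (\<Prod>v\<in>{p, q}. f v) = f p * (f q :: nat)"
  by simp

theorem lemma5:
  fixes n k :: nat and V :: "nat set" and E :: "nat set set"
  assumes "3 \<le> k" and "k \<le> n - 1"
    and "(V, E) \<in> CT n k"
    and "\<forall>(V', E') \<in> CT n k. M2 E' \<le> M2 E"
    and "\<exists>u v. adj E u v \<and> deg E u = 1 \<and> deg E v = 4"
  shows "\<not> (\<exists>u v. adj E u v \<and> deg E u = 3 \<and> deg E v = 2)"
proof
  assume "\<exists>u v. adj E u v \<and> deg E u = 3 \<and> deg E v = 2"
  then obtain w x where wx: "adj E w x" and dw: "deg E w = 3" and dx: "deg E x = 2" by blast
  obtain u v where uv: "adj E u v" and du: "deg E u = 1" and dv: "deg E v = 4" using assms(5) by blast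
  have C: "is_tree V E \<and> chemical V E \<and> card V = n \<and> num_segments E = k"
    using assms(3) unfolding CT_def by simp
  have T: "is_tree V E" and cardV: "card V = n" and nsE: "num_segments E = k" using C by blast+
  have TT: "finite V \<and> V \<noteq> {} \<and> E \<subseteq> pairs V \<and>
     (\<forall>u\<in>V. \<forall>v\<in>V. (u, v) \<in> {(x, y). adj E x y}\<^sup>*) \<and> card E = card V - 1"
    using T[unfolded is_tree_def pairs_def[symmetric]] .
  have fin: "finite V" using conjunct1[OF TT] .
  have EV: "E \<subseteq> pairs V" using TT by blast
  have finE: "finite E" using finite_E[OF fin EV] .
  have wxE: "{w, x} \<in> E" and wnx: "w \<noteq> x" using wx unfolding adj_def by auto
  have uvE: "{u, v} \<in> E" and unv: "u \<noteq> v" using uv unfolding adj_def by auto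
  have finx: "finite {e \<in> E. x \<in> e}" using finE by simp
  have "card {e \<in> E. x \<in> e} = 2" using dx unfolding deg_def .
  then obtain A B where AB: "{e \<in> E. x \<in> e} = {A, B}" "A \<noteq> B" by (meson card_2_iff)
  obtain e2 where e2: "e2 \<in> E" "x \<in> e2" "e2 \<noteq> {w, x}" using AB by blast
  obtain y where y: "y \<noteq> x" "e2 = {x, y}" using edge_form[OF EV e2(1,2)] by blast
  have xyE: "{x, y} \<in> E" using e2 y by simp
  have ynw: "y \<noteq> w" using e2(3) y(2) by (auto simp: insert_commute)
  have Sx: "{e \<in> E. x \<in> e} = {{w, x}, {x, y}}"
  proof -
    have sub: "{{w, x}, {x, y}} \<subseteq> {e \<in> E. x \<in> e}" using wxE xyE by auto
    have "card {{w, x}, {x, y}} = 2" using ynw wnx y(1) by (auto simp: doubleton_eq_iff)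
    then show ?thesis using card_subset_eq[OF finx sub] dx unfolding deg_def by simp
  qed
  have Su: "{e \<in> E. u \<in> e} = {{u, v}}"
  proof -
    have sub: "{{u, v}} \<subseteq> {e \<in> E. u \<in> e}" using uvE by auto
    have "finite {e \<in> E. u \<in> e}" using finE by simp
    then show ?thesis using card_subset_eq[OF _ sub] du unfolding deg_def by simp
  qed
  have dist: "u \<noteq> w" "u \<noteq> x" "v \<noteq> w" "v \<noteq> x" using du dv dw dx by auto
  have ynu: "y \<noteq> u"
  proof
    assume "y = u"
    then have "{x, y} \<in> {e \<in> E. u \<in> e}" using xyE by simp
    then have "{x, y} = {u, v}" using Su by simp
    then show False using dist y(1) \<open>y = u\<close> by (auto simp: doubleton_eq_iff)
  qed
  have wyE: "{w, y} \<notin> E"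
  proof
    assume "{w, y} \<in> E"
    then show False using no_triangle[OF T wxE xyE _ wnx y(1)[symmetric] ynw[symmetric]] by blast
  qed
  have wV: "w \<in> V" and yV: "y \<in> V" using edge_mem[OF EV wxE] edge_mem[OF EV xyE] by auto
  define E0 where "E0 = insert {w, y} (E - {{w, x}, {x, y}})"
  define V0 where "V0 = V - {x}"
  have xV0: "x \<notin> V0" unfolding V0_def by simp
  have Vx: "V = insert x V0" unfolding V0_def using edge_mem[OF EV wxE] by auto
  have xnot_rest: "x \<notin> e" if "e \<in> E" "e \<noteq> {w, x}" "e \<noteq> {x, y}" for e
    using Sx that by blast
  have E0V0: "E0 \<subseteq> pairs V0"
  proof
    fix e assume "e \<in> E0"
    then consider "e = {w, y}" | "e \<in> E" "e \<noteq> {w, x}" "e \<noteq> {x, y}" unfolding E0_def by blast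
    then show "e \<in> pairs V0"
    proof cases
      case 1 then show ?thesis using wV yV ynw wnx y(1) unfolding pairs_def V0_def by blast
    next
      case 2
      have "x \<notin> e" using xnot_rest 2 by blast
      moreover have "e \<in> pairs V" using EV 2 by blast
      ultimately show ?thesis unfolding pairs_def V0_def by blast
    qed
  qed
  have finE0: "finite E0" unfolding E0_def using finE by simp
  have xnot0: "\<forall>e\<in>E0. x \<notin> e" using xV0 edge_mem[OF E0V0] by metis
  have two0: "\<forall>e\<in>E0. \<exists>p q. p \<noteq> q \<and> e = {p, q}" using E0V0 pairs_two by (metis subsetD)
  have wyE0: "{w, y} \<in> E0" unfolding E0_def by simp
  interpret s1: sdv E0 w y x
    using finE0 wyE0 ynw xnot0 two0 by unfold_locales auto
  have E_eq: "subdiv E0 w y x = E"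
  proof -
    have "E0 - {{w, y}} = E - {{w, x}, {x, y}}" unfolding E0_def using wyE by auto
    then show ?thesis unfolding subdiv_def using wxE xyE by auto
  qed
  have T0: "is_tree V0 E0" using s1.tree_iff[OF xV0 E0V0] T E_eq Vx by simp
  have uvE0: "{u, v} \<in> E0"
  proof -
    have "{u, v} \<noteq> {w, x}" "{u, v} \<noteq> {x, y}" using dist ynu[symmetric] unv
      by (auto simp: doubleton_eq_iff)
    then show ?thesis unfolding E0_def using uvE by blast
  qed
  interpret s2: sdv E0 u v x
    using finE0 uvE0 unv xnot0 two0 by unfold_locales auto
  define E2 where "E2 = subdiv E0 u v x"
  have T2: "is_tree V E2" using s2.tree_iff[OF xV0 E0V0] T0 Vx unfolding E2_def by simp
  have degeq: "deg E2 = deg E"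
  proof
    fix z show "deg E2 z = deg E z"
    proof (cases "z = x")
      case True
      then show ?thesis unfolding E2_def using s2.deg1_x s1.deg1_x E_eq by simp
    next
      case False
      then show ?thesis unfolding E2_def using s2.deg1_other s1.deg1_other E_eq by metis
    qed
  qed
  have ns2: "num_segments E2 = k" using s2.num_seg_eq s1.num_seg_eq E_eq nsE unfolding E2_def by simp
  have ch2: "chemical V E2" using C degeq unfolding chemical_def by simp
  have "(V, E2) \<in> CT n k" unfolding CT_def using T2 ch2 cardV ns2 by simp
  then have le: "M2 E2 \<le> M2 E" using assms(4) by fastforce
  define P where "P e = (\<Prod>v\<in>e. deg E v)" for e
  have M2E: "M2 E = sum P E" unfolding M2_def P_def ..
  have M2E2: "M2 E2 = sum P E2" unfolding M2_def P_def degeq ..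
  have h1: "sum P E + P {w, y} = sum P E0 + P {w, x} + P {x, y}"
    using s1.sum_E1[of P] E_eq by simp
  have h2: "sum P E2 + P {u, v} = sum P E0 + P {u, x} + P {x, v}"
    using s2.sum_E1[of P] unfolding E2_def by simp
  have dy: "deg E y \<ge> 1"
  proof -
    have "{x, y} \<in> {e \<in> E. y \<in> e}" using xyE by simp
    moreover have "finite {e \<in> E. y \<in> e}" using finE by simp
    ultimately show ?thesis unfolding deg_def by (metis One_nat_def Suc_leI card_gt_0_iff empty_iff)
  qed
  have pv: "P {w, y} = 3 * deg E y" "P {w, x} = 6" "P {x, y} = 2 * deg E y"
    "P {u, v} = 4" "P {u, x} = 2" "P {x, v} = 8"
    unfolding P_def using ynw wnx y(1) unv dist dw dx du dv by auto
  show False using h1 h2 pv dy le M2E M2E2 by linarith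
qed

end
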